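(* Let $\Gamma\subseteq\Lambda^+$ be reflective, with $S\subseteq\mathbb Z\Gamma$, $E(\Gamma)$ part of a basis of $(\mathbb Z\Gamma)^*$, and $\mathbb Z\Gamma$ $W$-invariant. Then $\langle\delta,\alpha\rangle\ge0$ for all $\delta\in E(\Gamma)$ and all $\alpha\in S$.
   Context: $G$: complex connected reductive group with Borel $B$, maximal torus $T$, weight lattice $\Lambda$, dominant weights $\Lambda^+$, simple roots $S$, Weyl group $W$ (acting on $\Lambda$ and dually), coroots $\alpha^\vee\in\mathrm{Hom}(\Lambda,\mathbb Z)$. A finitely generated $\Gamma\subseteq\Lambda^+$ is normal if $\mathbb Z\Gamma\cap\mathbb Q_{\ge0}\Gamma=\Gamma$. $\Gamma$ is reflective if it is normal and (1) $\mathrm{rk}\,\mathbb Z\Gamma=\mathrm{rk}\,\Lambda$; (2) the set of hyperplanes spanned by the codimension-1 faces of the cone $\mathbb Q_{\ge0}\Gamma$ is $W$-stable; (3) every codimension-1 face of $\mathbb Q_{\ge0}\Gamma$ meets the open positive Weyl chamber. $\Gamma^\vee=\{v\in\mathrm{Hom}_{\mathbb Z}(\mathbb Z\Gamma,\mathbb Q):\langle v,\gamma\rangle\ge0\ \forall\gamma\in\Gamma\}$; $E(\Gamma)$ is the set of primitive elements of $(\mathbb Z\Gamma)^*$ spanning extremal rays of $\Gamma^\vee$. *)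

theory Defs
  imports "HOL-Analysis.Analysis"
begin

text \<open>Model: the weight lattice Lambda is the integer lattice in real^'n; Hom(Lambda, Z) is
identified with the integer lattice as well via the standard inner product, so the pairing
of a coweight v with a weight x is v \<bullet> x.  A connected complex reductive group with
(B,T) is encoded by its (reduced) root datum together with the base S of simple roots.\<close>

definition lattice_pts :: "(real^'n) set" where
  "lattice_pts = {x. \<forall>i. x $ i \<in> \<int>}"

definition refl :: "real^'n \<Rightarrow> real^'n \<Rightarrow> real^'n \<Rightarrow> real^'n" where
  "refl a av x = x - (av \<bullet> x) *\<^sub>R a"

definition root_datum :: "(real^'n) set \<Rightarrow> (real^'n \<Rightarrow> real^'n) \<Rightarrow> bool" where
  "root_datum R cor \<longleftrightarrow> finite R \<and> R \<subseteq> lattice_pts \<and> cor ` R \<subseteq> lattice_pts \<and> inj_on cor R \<and>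
     (\<forall>a\<in>R. cor a \<bullet> a = 2 \<and> refl a (cor a) ` R \<subseteq> R \<and> refl (cor a) a ` (cor ` R) \<subseteq> cor ` R)"

definition reduced :: "(real^'n) set \<Rightarrow> bool" where
  "reduced R \<longleftrightarrow> (\<forall>a\<in>R. 2 *\<^sub>R a \<notin> R)"

definition is_base :: "(real^'n) set \<Rightarrow> (real^'n) set \<Rightarrow> bool" where
  "is_base R S \<longleftrightarrow> S \<subseteq> R \<and> independent S \<and>
     (\<forall>a\<in>R. \<exists>c. (\<forall>s\<in>S. c s \<in> \<nat>) \<and> (a = (\<Sum>s\<in>S. c s *\<^sub>R s) \<or> a = - (\<Sum>s\<in>S. c s *\<^sub>R s)))"

inductive_set weyl_group :: "(real^'n) set \<Rightarrow> (real^'n \<Rightarrow> real^'n) \<Rightarrow> (real^'n \<Rightarrow> real^'n) set"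
  for R cor where
  weyl_id: "id \<in> weyl_group R cor"
| weyl_step: "w \<in> weyl_group R cor \<Longrightarrow> a \<in> R \<Longrightarrow> refl a (cor a) \<circ> w \<in> weyl_group R cor"

definition dominant :: "(real^'n) set \<Rightarrow> (real^'n \<Rightarrow> real^'n) \<Rightarrow> (real^'n) set" where
  "dominant S cor = {x \<in> lattice_pts. \<forall>a\<in>S. cor a \<bullet> x \<ge> 0}"

definition open_chamber :: "(real^'n) set \<Rightarrow> (real^'n \<Rightarrow> real^'n) \<Rightarrow> (real^'n) set" where
  "open_chamber S cor = {x. \<forall>a\<in>S. cor a \<bullet> x > 0}"

definition combos :: "real set \<Rightarrow> (real^'n) set \<Rightarrow> (real^'n) set" where
  "combos K A = {x. \<exists>F c. finite F \<and> F \<subseteq> A \<and> (\<forall>a\<in>F. c a \<in> K) \<and> x = (\<Sum>a\<in>F. c a *\<^sub>R a)}"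

abbreviation int_span :: "(real^'n) set \<Rightarrow> (real^'n) set" where
  "int_span A \<equiv> combos \<int> A"
abbreviation nat_span :: "(real^'n) set \<Rightarrow> (real^'n) set" where
  "nat_span A \<equiv> combos \<nat> A"
abbreviation rat_cone :: "(real^'n) set \<Rightarrow> (real^'n) set" where
  "rat_cone A \<equiv> combos {q\<in>\<rat>. q \<ge> 0} A"
abbreviation real_cone :: "(real^'n) set \<Rightarrow> (real^'n) set" where
  "real_cone A \<equiv> combos {r. r \<ge> 0} A"

definition fg_monoid :: "(real^'n) set \<Rightarrow> bool" where
  "fg_monoid \<Gamma> \<longleftrightarrow> (\<exists>G. finite G \<and> \<Gamma> = nat_span G)"

definition normal_monoid :: "(real^'n) set \<Rightarrow> bool" where
  "normal_monoid \<Gamma> \<longleftrightarrow> int_span \<Gamma> \<inter> rat_cone \<Gamma> = \<Gamma>"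

definition facets :: "(real^'n) set \<Rightarrow> (real^'n) set set" where
  "facets C = {F. F face_of C \<and> aff_dim F = aff_dim C - 1}"

definition reflective :: "(real^'n) set \<Rightarrow> (real^'n) set \<Rightarrow> (real^'n \<Rightarrow> real^'n) \<Rightarrow> (real^'n) set \<Rightarrow> bool" where
  "reflective R S cor \<Gamma> \<longleftrightarrow> normal_monoid \<Gamma> \<and>
     dim (int_span \<Gamma>) = DIM(real^'n) \<and>
     (\<forall>w\<in>weyl_group R cor. \<forall>F\<in>facets (real_cone \<Gamma>). \<exists>F'\<in>facets (real_cone \<Gamma>). w ` span F = span F') \<and>
     (\<forall>F\<in>facets (real_cone \<Gamma>). F \<inter> open_chamber S cor \<noteq> {})"

text \<open>Dual lattice (Z Gamma)^* and dual cone Gamma^vee (Hom(Z Gamma, Q) identified with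
Q^n via the pairing, which is legitimate since Z Gamma has full rank).\<close>
definition dual_lattice :: "(real^'n) set \<Rightarrow> (real^'n) set" where
  "dual_lattice \<Gamma> = {v. \<forall>x\<in>int_span \<Gamma>. v \<bullet> x \<in> \<int>}"

definition dual_cone :: "(real^'n) set \<Rightarrow> (real^'n) set" where
  "dual_cone \<Gamma> = {v. \<forall>g\<in>\<Gamma>. v \<bullet> g \<ge> 0}"

definition primitive_in :: "(real^'n) set \<Rightarrow> real^'n \<Rightarrow> bool" where
  "primitive_in L v \<longleftrightarrow> v \<in> L \<and> v \<noteq> 0 \<and> (\<forall>k::nat. k \<ge> 2 \<longrightarrow> (1 / real k) *\<^sub>R v \<notin> L)"

definition E_set :: "(real^'n) set \<Rightarrow> (real^'n) set" where
  "E_set \<Gamma> = {d. primitive_in (dual_lattice \<Gamma>) d \<and>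
      {t *\<^sub>R d | t. t \<ge> 0} face_of dual_cone \<Gamma>}"

definition int_independent :: "(real^'n) set \<Rightarrow> bool" where
  "int_independent B \<longleftrightarrow> (\<forall>F c. finite F \<and> F \<subseteq> B \<and> (\<forall>b\<in>F. c b \<in> \<int>) \<and> (\<Sum>b\<in>F. c b *\<^sub>R b) = 0
       \<longrightarrow> (\<forall>b\<in>F. c b = 0))"

definition part_of_lattice_basis :: "(real^'n) set \<Rightarrow> (real^'n) set \<Rightarrow> bool" where
  "part_of_lattice_basis E L \<longleftrightarrow> (\<exists>B. E \<subseteq> B \<and> int_independent B \<and> int_span B = L)"

end

theory Submission imports Defs begin

lemma combo_nonneg:
  fixes A :: "(real^'n) set"
  assumes "\<forall>g\<in>A. v \<bullet> g \<ge> 0" "K \<subseteq> {r. r \<ge> 0}" "x \<in> combos K A"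
  shows "v \<bullet> x \<ge> 0"
proof -
  from assms(3) obtain F c where "finite F" "F \<subseteq> A" "\<forall>a\<in>F. c a \<in> K" "x = (\<Sum>a\<in>F. c a *\<^sub>R a)"
    unfolding combos_def by blast
  then show ?thesis using assms(1,2)
    by (auto simp: inner_sum_right intro!: sum_nonneg mult_nonneg_nonneg)
qed

lemma combo_in: "(a::real^'n) \<in> A \<Longrightarrow> 1 \<in> K \<Longrightarrow> a \<in> combos K A"
  unfolding combos_def by (rule CollectI, rule exI[of _ "{a}"], rule exI[of _ "\<lambda>_. 1"]) auto

lemma combo_zero: "0 \<in> combos K (A::(real^'n) set)"
  unfolding combos_def by (rule CollectI, rule exI[of _ "{}"]) auto

lemma combo_span: "combos K (A::(real^'n) set) \<subseteq> span A"
proof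
  fix x assume "x \<in> combos K A"
  then obtain F c where "finite F" "F \<subseteq> A" "x = (\<Sum>a\<in>F. c a *\<^sub>R a)"
    unfolding combos_def by blast
  then show "x \<in> span A"
    by (metis (no_types, lifting) span_sum span_scale span_base subsetD)
qed

lemma convex_real_cone: "convex (real_cone (A::(real^'n) set))"
proof (rule convexI)
  fix x y :: "real^'n" and u v :: real
  assume x: "x \<in> real_cone A" and y: "y \<in> real_cone A" and uv: "0 \<le> u" "0 \<le> v" "u + v = 1"
  from x obtain F1 c1 where F1: "finite F1" "F1 \<subseteq> A" "\<forall>a\<in>F1. c1 a \<ge> 0" "x = (\<Sum>a\<in>F1. c1 a *\<^sub>R a)"
    unfolding combos_def by blast
  from y obtain F2 c2 where F2: "finite F2" "F2 \<subseteq> A" "\<forall>a\<in>F2. c2 a \<ge> 0" "y = (\<Sum>a\<in>F2. c2 a *\<^sub>R a)"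
    unfolding combos_def by blast
  define c where "c a = u * (if a \<in> F1 then c1 a else 0) + v * (if a \<in> F2 then c2 a else 0)" for a
  have "x = (\<Sum>a\<in>F1\<union>F2. (if a \<in> F1 then c1 a else 0) *\<^sub>R a)"
    using F1 F2 by (simp add: sum.mono_neutral_cong_right if_distrib[of "\<lambda>t. t *\<^sub>R _"] sum.If_cases Int_absorb2)
  moreover have "y = (\<Sum>a\<in>F1\<union>F2. (if a \<in> F2 then c2 a else 0) *\<^sub>R a)"
    using F1 F2 by (simp add: sum.mono_neutral_cong_right if_distrib[of "\<lambda>t. t *\<^sub>R _"] sum.If_cases Int_absorb1)
  ultimately have "u *\<^sub>R x + v *\<^sub>R y = (\<Sum>a\<in>F1\<union>F2. c a *\<^sub>R a)"
    by (simp add: c_def scaleR_sum_right sum.distrib scaleR_add_left)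
  moreover have "\<forall>a\<in>F1\<union>F2. c a \<ge> 0" using F1 F2 uv by (auto simp: c_def)
  ultimately show "u *\<^sub>R x + v *\<^sub>R y \<in> real_cone A"
    unfolding combos_def using F1 F2 by (intro CollectI exI[of _ "F1\<union>F2"] exI[of _ c]) auto
qed

lemma dual_nonneg_C:
  fixes \<Gamma> :: "(real^'n) set"
  assumes "\<forall>g\<in>\<Gamma>. v \<bullet> g \<ge> 0" "x \<in> real_cone \<Gamma>"
  shows "v \<bullet> x \<ge> 0"
  using combo_nonneg[OF assms(1) _ assms(2)] by auto

lemma aff_dim_C:
  fixes \<Gamma> :: "(real^'n) set"
  assumes "dim (int_span \<Gamma>) = DIM(real^'n)"
  shows "aff_dim (real_cone \<Gamma>) = int DIM(real^'n)"
proof -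
  have A: "dim (int_span \<Gamma>) \<le> dim (real_cone \<Gamma>)"
  proof -
    have "int_span \<Gamma> \<subseteq> span \<Gamma>" by (rule combo_span)
    also have "\<dots> \<subseteq> span (real_cone \<Gamma>)"
      by (rule span_mono) (intro subsetI combo_in, simp_all)
    finally have "dim (int_span \<Gamma>) \<le> dim (span (real_cone \<Gamma>))" by (rule dim_subset)
    then show ?thesis by simp
  qed
  have "0 \<in> affine hull (real_cone \<Gamma>)"
    by (rule hull_inc) (rule combo_zero)
  then have "affine hull (real_cone \<Gamma>) = span (real_cone \<Gamma>)" by (rule affine_hull_span_0)
  then have "aff_dim (real_cone \<Gamma>) = aff_dim (span (real_cone \<Gamma>))"
    by (metis aff_dim_affine_hull)
  also have "\<dots> = int (dim (real_cone \<Gamma>))"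
    by (simp add: aff_dim_subspace)
  finally have B: "aff_dim (real_cone \<Gamma>) = int (dim (real_cone \<Gamma>))" .
  have "aff_dim (real_cone \<Gamma>) \<le> int DIM(real^'n)" by (rule aff_dim_le_DIM)
  then show ?thesis using assms A B by linarith
qed

lemma facet_exists:
  fixes \<Gamma> G :: "(real^'n) set"
  assumes G: "finite G" "\<Gamma> = nat_span G" and d: "d \<in> E_set \<Gamma>"
    and full: "dim (int_span \<Gamma>) = DIM(real^'n)"
  shows "real_cone \<Gamma> \<inter> {x. d \<bullet> x = 0} \<in> facets (real_cone \<Gamma>)"
proof -
  define C where "C = real_cone \<Gamma>"
  define ray where "ray = {t *\<^sub>R d | t. t \<ge> 0}"
  have d0: "d \<noteq> 0" and face: "ray face_of dual_cone \<Gamma>"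
    using d unfolding E_set_def primitive_in_def ray_def by auto
  have "d \<in> ray" unfolding ray_def by (rule CollectI, rule exI[of _ 1]) auto
  then have dD: "d \<in> dual_cone \<Gamma>" using face_of_imp_subset[OF face] by blast
  have GG: "G \<subseteq> \<Gamma>" using G(2) by (auto intro: combo_in)
  have dG: "\<forall>g\<in>G. d \<bullet> g \<ge> 0" using dD GG unfolding dual_cone_def by auto
  have inD: "w \<in> dual_cone \<Gamma>" if "\<forall>g\<in>G. w \<bullet> g \<ge> 0" for w
    unfolding dual_cone_def G(2)
    using combo_nonneg[OF that, of "\<nat>"] by (auto simp: Nats_def image_subset_iff)
  define G' where "G' = {g\<in>G. d \<bullet> g = 0}"
  have dimG': "dim G' + 1 \<ge> DIM(real^'n)"
  proof (rule ccontr)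
    assume "\<not> ?thesis"
    then have "dim (insert d G') < DIM(real^'n)" by (simp add: dim_insert)
    then obtain v where v0: "v \<noteq> 0" and vo: "\<And>y. y \<in> span (insert d G') \<Longrightarrow> orthogonal v y"
      using orthogonal_to_subspace_exists by blast
    have vd: "v \<bullet> d = 0" using vo[of d] by (simp add: span_base orthogonal_def)
    have vG': "v \<bullet> g = 0" if "g \<in> G'" for g using vo[of g] that by (simp add: span_base orthogonal_def)
    define M where "M = insert 1 ((\<lambda>g. (d \<bullet> g) / (\<bar>v \<bullet> g\<bar> + 1)) ` (G - G'))"
    define e where "e = Min M"
    have finM: "finite M" using G(1) by (simp add: M_def)
    have "\<forall>m\<in>M. m > 0"
    proof
      fix m assume "m \<in> M"
      then consider "m = 1" | g where "g \<in> G - G'" "m = (d \<bullet> g) / (\<bar>v \<bullet> g\<bar> + 1)"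
        unfolding M_def by blast
      then show "m > 0"
      proof cases
        case 2
        then have "d \<bullet> g > 0" using dG unfolding G'_def by force
        then show ?thesis using 2 by (simp add: divide_pos_pos add_nonneg_pos)
      qed simp
    qed
    then have e0: "e > 0" using finM by (simp add: e_def M_def)
    have eg: "e * \<bar>v \<bullet> g\<bar> \<le> d \<bullet> g" if "g \<in> G - G'" for g
    proof -
      have "e \<le> (d \<bullet> g) / (\<bar>v \<bullet> g\<bar> + 1)" unfolding e_def using finM that
        by (intro Min_le) (auto simp: M_def)
      then have "e * (\<bar>v \<bullet> g\<bar> + 1) \<le> d \<bullet> g" by (simp add: field_simps)
      moreover have "e * \<bar>v \<bullet> g\<bar> \<le> e * (\<bar>v \<bullet> g\<bar> + 1)" using e0 by simp
      ultimately show ?thesis by linarith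
    qed
    have pm: "\<forall>g\<in>G. (d + s *\<^sub>R (e *\<^sub>R v)) \<bullet> g \<ge> 0" if "\<bar>s\<bar> = 1" for s
    proof
      fix g assume g: "g \<in> G"
      show "(d + s *\<^sub>R (e *\<^sub>R v)) \<bullet> g \<ge> 0"
      proof (cases "g \<in> G'")
        case True then show ?thesis using vG' by (simp add: inner_add_left G'_def)
      next
        case False
        then have "e * \<bar>v \<bullet> g\<bar> \<le> d \<bullet> g" using eg g by auto
        moreover have "\<bar>s * e * (v \<bullet> g)\<bar> = e * \<bar>v \<bullet> g\<bar>" using that e0 by (simp add: abs_mult)
        ultimately show ?thesis by (simp add: inner_add_left abs_le_iff; linarith)
      qed
    qed
    have p: "d + e *\<^sub>R v \<in> dual_cone \<Gamma>" using inD pm[of 1] by simp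
    have m: "d - e *\<^sub>R v \<in> dual_cone \<Gamma>" using inD pm[of "-1"] by simp
    have "(d + e *\<^sub>R v) - (d - e *\<^sub>R v) = 2 *\<^sub>R (e *\<^sub>R v)" by (simp only: scaleR_2) (simp add: algebra_simps)
    then have ne: "d - e *\<^sub>R v \<noteq> d + e *\<^sub>R v" using e0 v0 by (metis diff_self scaleR_eq_0_iff zero_neq_numeral less_irrefl)
    have "(d - e *\<^sub>R v) + (d + e *\<^sub>R v) = 2 *\<^sub>R d" by (simp add: scaleR_2)
    then have "midpoint (d - e *\<^sub>R v) (d + e *\<^sub>R v) = d"
      by (simp add: midpoint_def)
    then have "d \<in> open_segment (d - e *\<^sub>R v) (d + e *\<^sub>R v)"
      using ne midpoint_in_open_segment by metis
    then have "d + e *\<^sub>R v \<in> ray" using face_ofD[OF face _ m p \<open>d \<in> ray\<close>] by blast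
    then obtain t where "d + e *\<^sub>R v = t *\<^sub>R d" unfolding ray_def by blast
    then have "(d + e *\<^sub>R v) \<bullet> v = (t *\<^sub>R d) \<bullet> v" by simp
    then have "e * (v \<bullet> v) = 0" using vd by (simp add: inner_add_left inner_add_right inner_commute)
    then show False using e0 v0 by simp
  qed
  define F where "F = C \<inter> {x. d \<bullet> x = 0}"
  have convC: "convex C" unfolding C_def by (rule convex_real_cone)
  have Cnn: "\<And>x. x \<in> C \<Longrightarrow> d \<bullet> x \<ge> 0" unfolding C_def
    using dD dual_nonneg_C unfolding dual_cone_def by blast
  have faceF: "F face_of C" unfolding F_def
    using face_of_Int_supporting_hyperplane_ge[OF convC, where a=d and b=0] Cnn by simp
  have "insert 0 G' \<subseteq> F"
    using GG combo_zero[of "{r. r\<ge>0}" \<Gamma>] unfolding F_def C_def G'_def by (auto intro: combo_in)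
  then have "aff_dim (insert 0 G') \<le> aff_dim F" by (rule aff_dim_subset)
  moreover have "aff_dim (insert 0 G') = int (dim G')"
  proof -
    have "0 \<in> affine hull (insert 0 G')" by (simp add: hull_inc)
    then have "affine hull (insert 0 G') = span (insert 0 G')" by (rule affine_hull_span_0)
    then have "aff_dim (insert 0 G') = aff_dim (span (insert 0 G'))" by (metis aff_dim_affine_hull)
    also have "\<dots> = int (dim G')" using dim_insert[of 0 G'] by (simp add: aff_dim_subspace span_zero)
    finally show ?thesis .
  qed
  moreover have "aff_dim F \<le> aff_dim {x. d \<bullet> x = 0}" unfolding F_def by (rule aff_dim_subset) auto
  moreover have "aff_dim {x. d \<bullet> x = 0} = int DIM(real^'n) - 1" using d0 by simp
  moreover have "aff_dim C = int DIM(real^'n)" unfolding C_def by (rule aff_dim_C[OF full])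
  ultimately have "aff_dim F = aff_dim C - 1" using dimG' by linarith
  then show ?thesis using faceF unfolding facets_def F_def C_def by auto
qed



theorem mainTheorem17:
  fixes R S :: "(real^'n) set" and cor :: "real^'n \<Rightarrow> real^'n" and \<Gamma> :: "(real^'n) set"
  assumes "root_datum R cor" and "reduced R" and "is_base R S"
    and "fg_monoid \<Gamma>" and "\<Gamma> \<subseteq> dominant S cor"
    and "reflective R S cor \<Gamma>"
    and "S \<subseteq> int_span \<Gamma>"
    and "part_of_lattice_basis (E_set \<Gamma>) (dual_lattice \<Gamma>)"
    and "\<forall>w\<in>weyl_group R cor. w ` int_span \<Gamma> \<subseteq> int_span \<Gamma>"
  shows "\<forall>d\<in>E_set \<Gamma>. \<forall>a\<in>S. d \<bullet> a \<ge> 0"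
proof (intro ballI, rule ccontr)
  fix d a assume dE: "d \<in> E_set \<Gamma>" and aS: "a \<in> S" and neg: "\<not> d \<bullet> a \<ge> 0"
  obtain G where G: "finite G" "\<Gamma> = nat_span G" using assms(4) unfolding fg_monoid_def by blast
  have full: "dim (int_span \<Gamma>) = DIM(real^'n)"
    and stab: "\<forall>w\<in>weyl_group R cor. \<forall>F\<in>facets (real_cone \<Gamma>). \<exists>F'\<in>facets (real_cone \<Gamma>). w ` span F = span F'"
    and cham: "\<forall>F\<in>facets (real_cone \<Gamma>). F \<inter> open_chamber S cor \<noteq> {}"
    using assms(6) unfolding reflective_def by auto
  define C where "C = real_cone \<Gamma>"
  define F where "F = C \<inter> {x. d \<bullet> x = 0}"
  have FC: "F \<in> facets C" unfolding F_def C_def by (rule facet_exists[OF G dE full])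
  then obtain x where xF: "x \<in> F" and xch: "x \<in> open_chamber S cor"
    using cham unfolding C_def by blast
  have cx: "cor a \<bullet> x > 0" using xch aS unfolding open_chamber_def by auto
  have aR: "a \<in> R" using assms(3) aS unfolding is_base_def by auto
  have ca2: "cor a \<bullet> a = 2" using assms(1) aR unfolding root_datum_def by auto
  define s where "s = refl a (cor a)"
  have sW: "s \<circ> id \<in> weyl_group R cor" unfolding s_def by (rule weyl_step[OF weyl_id aR])
  obtain F' where F'f: "F' \<in> facets C" and sF: "(s \<circ> id) ` span F = span F'"
    using stab sW FC unfolding C_def by blast
  have F'C: "F' \<subseteq> C" using F'f unfolding facets_def by (auto dest: face_of_imp_subset)
  have dD: "\<forall>g\<in>\<Gamma>. d \<bullet> g \<ge> 0"
  proof -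
    have "{t *\<^sub>R d | t. t \<ge> 0} face_of dual_cone \<Gamma>" using dE unfolding E_set_def by auto
    moreover have "d \<in> {t *\<^sub>R d | t. t \<ge> 0}" by (rule CollectI, rule exI[of _ 1]) auto
    ultimately show ?thesis using face_of_imp_subset unfolding dual_cone_def by blast
  qed
  have cD: "\<forall>g\<in>\<Gamma>. cor a \<bullet> g \<ge> 0" using assms(5) aS unfolding dominant_def by auto
  define d' where "d' = d - (d \<bullet> a) *\<^sub>R cor a"
  have spanF: "span F \<subseteq> {y. d \<bullet> y = 0}"
    by (rule span_minimal) (auto simp: F_def subspace_hyperplane)
  have key: "d' \<bullet> s y = d \<bullet> y" for y
    unfolding d'_def s_def refl_def
    by (simp add: inner_diff_left inner_diff_right algebra_simps inner_commute) (metis ca2 inner_commute)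
  have "cor a \<bullet> z = 0" if zF': "z \<in> F'" for z
  proof -
    have "z \<in> span F'" using zF' by (rule span_base)
    then obtain y where "y \<in> span F" "z = s y" using sF by auto
    then have "d' \<bullet> z = 0" using key spanF by auto
    moreover have "d \<bullet> z \<ge> 0" "cor a \<bullet> z \<ge> 0"
      using dual_nonneg_C[OF dD] dual_nonneg_C[OF cD] zF' F'C unfolding C_def by auto
    ultimately show ?thesis using neg unfolding d'_def
      by (simp add: inner_diff_left) (smt (verit) mult_nonneg_nonneg mult_neg_pos)
  qed
  then have "span F' \<subseteq> {z. cor a \<bullet> z = 0}"
    by (intro span_minimal) (auto simp: subspace_hyperplane)
  moreover have "s x \<in> span F'" using sF xF by (auto intro: span_base)
  ultimately have "cor a \<bullet> s x = 0" by auto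
  moreover have "cor a \<bullet> s x = - (cor a \<bullet> x)"
    unfolding s_def refl_def by (simp add: inner_diff_right ca2)
  ultimately show False using cx by simp
qed

end
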